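(* Let $k$ be an algebraically closed field, grade by $\mathbb{Z}$, let $A=k[x]$ with $|x|=0$ and zero differential, and $B=k\langle\epsilon\rangle=k[\epsilon]/(\epsilon^2)$ with $|\epsilon|=1$ and zero differential (both DG-algebras with zero curvature). Let $X$ be the CDG $B$-$A$-bimodule $B\otimes A$ with the differential determined by $d(1\otimes1)=\epsilon\otimes x$. Then $X\otimes_AA\cong X$ regarded as a left CDG $B$-module is not cofibrant in $B\text{-}mod^{II}_{co}$ (even though $A$ is cofibrant in $A\text{-}mod^{II}_{co}$ and $X$ is cofibrant in $B\text{-}mod\text{-}A^{II}_{co}$). In particular $\otimes_A$ with target the projective GL model structure is not a Quillen bifunctor in general.
   Context: For a CDG-algebra $R$, $R\text{-}mod^{II}_{co}$ is the projective Guan–Lazarev model structure on CDG $R$-modules with closed morphisms: weak equivalences are $f$ such that $Hom_R(T,f)$ is a quasi-isomorphism for every CDG $R$-module $T$ whose underlying graded module is free of finite rank (with $Hom_R$ the complex of graded $R$-linear maps with differential $f\mapsto df-(-1)^{|f|}fd$); fibrations are surjections; cofibrations are maps with the left lifting property against trivial fibrations. A CDG $B$-$A$-bimodule is a CDG $B\otimes A^{op}$-module, and $B\text{-}mod\text{-}A^{II}_{co}$ is the corresponding projective GL model structure. *)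

theory Defs
  imports Main "HOL-Library.Function_Algebras" "HOL-Computational_Algebra.Polynomial"
begin

definition alg_closed :: "'k::field itself \<Rightarrow> bool" where
  "alg_closed _ \<longleftrightarrow> (\<forall>p::'k poly. degree p > 0 \<longrightarrow> (\<exists>x. poly p x = 0))"

definition sc :: "'k::field \<Rightarrow> ('a \<Rightarrow> 'k) \<Rightarrow> ('a \<Rightarrow> 'k)" where
  "sc c x = (\<lambda>u. c * x u)"

definition ksign :: "int \<Rightarrow> 'k::field" where
  "ksign p = (if even p then 1 else -1)"

definition subsp :: "('a \<Rightarrow> 'k::field) set \<Rightarrow> bool" where
  "subsp S \<longleftrightarrow> 0 \<in> S \<and> (\<forall>x\<in>S. \<forall>y\<in>S. x + y \<in> S) \<and> (\<forall>c. \<forall>x\<in>S. sc c x \<in> S)"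

definition linmap :: "('a \<Rightarrow> 'k::field) set \<Rightarrow> ('b \<Rightarrow> 'k) set \<Rightarrow> (('a \<Rightarrow> 'k) \<Rightarrow> ('b \<Rightarrow> 'k)) \<Rightarrow> bool" where
  "linmap S T f \<longleftrightarrow> (\<forall>x\<in>S. f x \<in> T) \<and> (\<forall>x\<in>S. \<forall>y\<in>S. f (x + y) = f x + f y)
     \<and> (\<forall>c. \<forall>x\<in>S. f (sc c x) = sc c (f x))"

text \<open>A graded module over B = k[eps]/(eps^2), |eps| = 1, with a differential, given degree-wise:
  car n is the degree-n component, eps n : M^n -> M^(n+1) the action of eps,
  dif n : M^n -> M^(n+1) the differential.\<close>
record ('a, 'k) cdgB =
  car :: "int \<Rightarrow> ('a \<Rightarrow> 'k) set"
  eps :: "int \<Rightarrow> ('a \<Rightarrow> 'k) \<Rightarrow> ('a \<Rightarrow> 'k)"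
  dif :: "int \<Rightarrow> ('a \<Rightarrow> 'k) \<Rightarrow> ('a \<Rightarrow> 'k)"

text \<open>CDG B-module (B has zero differential and zero curvature): eps^2 = 0, d^2 = 0,
  d(eps m) = d(eps) m + (-1)^|eps| eps d(m) = - eps d(m).\<close>
definition is_cdgB :: "('a, 'k::field) cdgB \<Rightarrow> bool" where
  "is_cdgB M \<longleftrightarrow>
     (\<forall>n. subsp (car M n)) \<and>
     (\<forall>n. linmap (car M n) (car M (n+1)) (eps M n)) \<and>
     (\<forall>n. linmap (car M n) (car M (n+1)) (dif M n)) \<and>
     (\<forall>n. \<forall>m\<in>car M n. eps M (n+1) (eps M n m) = 0) \<and>
     (\<forall>n. \<forall>m\<in>car M n. dif M (n+1) (dif M n m) = 0) \<and>
     (\<forall>n. \<forall>m\<in>car M n. dif M (n+1) (eps M n m) = - eps M (n+1) (dif M n m))"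

definition closed_morph :: "('a, 'k::field) cdgB \<Rightarrow> ('b, 'k) cdgB \<Rightarrow>
    (int \<Rightarrow> ('a \<Rightarrow> 'k) \<Rightarrow> ('b \<Rightarrow> 'k)) \<Rightarrow> bool" where
  "closed_morph M N f \<longleftrightarrow>
     (\<forall>n. linmap (car M n) (car N n) (f n)) \<and>
     (\<forall>n. \<forall>m\<in>car M n. f (n+1) (eps M n m) = eps N n (f n m)) \<and>
     (\<forall>n. \<forall>m\<in>car M n. f (n+1) (dif M n m) = dif N n (f n m))"

text \<open>Elements of degree p of the complex Hom_B(M,N): graded B-linear maps of degree p,
  g(r m) = (-1)^(|g||r|) r g(m).\<close>
definition homB :: "('a, 'k::field) cdgB \<Rightarrow> ('b, 'k) cdgB \<Rightarrow> int \<Rightarrow>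
    (int \<Rightarrow> ('a \<Rightarrow> 'k) \<Rightarrow> ('b \<Rightarrow> 'k)) \<Rightarrow> bool" where
  "homB M N p g \<longleftrightarrow>
     (\<forall>n. linmap (car M n) (car N (n+p)) (g n)) \<and>
     (\<forall>n. \<forall>m\<in>car M n. g (n+1) (eps M n m) = sc (ksign p) (eps N (n+p) (g n m)))"

definition homD :: "('a, 'k::field) cdgB \<Rightarrow> ('b, 'k) cdgB \<Rightarrow> int \<Rightarrow>
    (int \<Rightarrow> ('a \<Rightarrow> 'k) \<Rightarrow> ('b \<Rightarrow> 'k)) \<Rightarrow> (int \<Rightarrow> ('a \<Rightarrow> 'k) \<Rightarrow> ('b \<Rightarrow> 'k))" where
  "homD M N p g = (\<lambda>n m. dif N (n+p) (g n m) - sc (ksign p) (g (n+1) (dif M n m)))"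

definition heq :: "('a, 'k::field) cdgB \<Rightarrow> (int \<Rightarrow> ('a \<Rightarrow> 'k) \<Rightarrow> ('b \<Rightarrow> 'k)) \<Rightarrow>
    (int \<Rightarrow> ('a \<Rightarrow> 'k) \<Rightarrow> ('b \<Rightarrow> 'k)) \<Rightarrow> bool" where
  "heq M g h \<longleftrightarrow> (\<forall>n. \<forall>m\<in>car M n. g n m = h n m)"

text \<open>Hom_B(T,f) : Hom_B(T,M) -> Hom_B(T,N) is a quasi-isomorphism
  (the induced map on cohomology is bijective in every degree p).\<close>
definition homB_qiso :: "('t, 'k::field) cdgB \<Rightarrow> ('a, 'k) cdgB \<Rightarrow> ('b, 'k) cdgB \<Rightarrow>
    (int \<Rightarrow> ('a \<Rightarrow> 'k) \<Rightarrow> ('b \<Rightarrow> 'k)) \<Rightarrow> bool" where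
  "homB_qiso T M N f \<longleftrightarrow> (\<forall>p.
     (\<forall>z. homB T N p z \<and> heq T (homD T N p z) (\<lambda>_ _. 0) \<longrightarrow>
        (\<exists>z'. homB T M p z' \<and> heq T (homD T M p z') (\<lambda>_ _. 0) \<and>
           (\<exists>h. homB T N (p-1) h \<and>
              heq T (\<lambda>n t. f (n+p) (z' n t) - z n t) (homD T N (p-1) h)))) \<and>
     (\<forall>z'. homB T M p z' \<and> heq T (homD T M p z') (\<lambda>_ _. 0) \<and>
        (\<exists>h. homB T N (p-1) h \<and> heq T (\<lambda>n t. f (n+p) (z' n t)) (homD T N (p-1) h)) \<longrightarrow>
        (\<exists>h'. homB T M (p-1) h' \<and> heq T z' (homD T M (p-1) h'))))"

text \<open>The underlying graded B-module is free of finite rank r, on homogeneous generators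
  gen i of degree deg i: in each degree m, {gen i | deg i = m} together with
  {eps gen i | deg i + 1 = m} is a k-basis.\<close>
definition free_fin :: "('a, 'k::field) cdgB \<Rightarrow> bool" where
  "free_fin T \<longleftrightarrow> (\<exists>(r::nat) (deg::nat \<Rightarrow> int) (gen::nat \<Rightarrow> ('a \<Rightarrow> 'k)).
     let comb = (\<lambda>m a b. (\<Sum>i\<in>{i. i < r \<and> deg i = m}. sc (a i) (gen i)) +
                         (\<Sum>i\<in>{i. i < r \<and> deg i + 1 = m}. sc (b i) (eps T (deg i) (gen i))))
     in (\<forall>i<r. gen i \<in> car T (deg i)) \<and>
        (\<forall>m. \<forall>t\<in>car T m. \<exists>a b. t = comb m a b) \<and>
        (\<forall>m a b. comb m a b = 0 \<longrightarrow>
            (\<forall>i<r. (deg i = m \<longrightarrow> a i = 0) \<and> (deg i + 1 = m \<longrightarrow> b i = 0))))"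

text \<open>Weak equivalences of the projective GL model structure B-mod^II_co
  (test objects T taken with elements in the same ambient type as M).\<close>
definition weqB :: "('a, 'k::field) cdgB \<Rightarrow> ('b, 'k) cdgB \<Rightarrow>
    (int \<Rightarrow> ('a \<Rightarrow> 'k) \<Rightarrow> ('b \<Rightarrow> 'k)) \<Rightarrow> bool" where
  "weqB M N f \<longleftrightarrow> (\<forall>T::('a, 'k) cdgB. is_cdgB T \<and> free_fin T \<longrightarrow> homB_qiso T M N f)"

definition fibB :: "('a, 'k::field) cdgB \<Rightarrow> ('b, 'k) cdgB \<Rightarrow>
    (int \<Rightarrow> ('a \<Rightarrow> 'k) \<Rightarrow> ('b \<Rightarrow> 'k)) \<Rightarrow> bool" where
  "fibB M N f \<longleftrightarrow> (\<forall>n. f n ` car M n = car N n)"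

text \<open>Cofibrant objects: 0 -> X has the LLP against all trivial fibrations M -> N
  (with M, N CDG B-modules whose elements live in the ambient type 'a => 'k).\<close>
definition cofibrantB :: "('a, 'k::field) cdgB \<Rightarrow> bool" where
  "cofibrantB X \<longleftrightarrow>
     (\<forall>(M::('a,'k) cdgB) (N::('a,'k) cdgB) pr.
        is_cdgB M \<and> is_cdgB N \<and> closed_morph M N pr \<and> fibB M N pr \<and> weqB M N pr \<longrightarrow>
        (\<forall>f. closed_morph X N f \<longrightarrow>
           (\<exists>g. closed_morph X M g \<and> (\<forall>n. \<forall>x\<in>car X n. pr n (g n x) = f n x))))"

text \<open>An element 1 (x) q(x) (degree 0)
  resp. eps (x) q(x) (degree 1) is represented by the coefficient sequence of q
  (finitely supported nat => k). eps acts by 1(x)q |-> eps(x)q, and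
  d(1(x)q) = eps (x) x q, d(eps(x)q) = 0, extending d(1(x)1) = eps(x)x.\<close>
definition finsupp :: "(nat \<Rightarrow> 'k::zero) set" where
  "finsupp = {f. finite {i. f i \<noteq> 0}}"

definition shiftx :: "(nat \<Rightarrow> 'k::zero) \<Rightarrow> (nat \<Rightarrow> 'k)" where
  "shiftx f = (\<lambda>i. if i = 0 then 0 else f (i - 1))"

definition Xmod :: "(nat, 'k::field) cdgB" where
  "Xmod = \<lparr> car = (\<lambda>n. if n = 0 \<or> n = 1 then finsupp else {0}),
            eps = (\<lambda>n f. if n = 0 then f else 0),
            dif = (\<lambda>n f. if n = 0 then shiftx f else 0) \<rparr>"

end

theory Submission
  imports Defs "HOL-Library.Nat_Bijection"
begin


lemma sum_fun_apply: "(sum f A) x = sum (\<lambda>a. f a x) A"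
  by (induction A rule: infinite_finite_induct) auto

definition cf :: "(nat \<Rightarrow> 'k) \<Rightarrow> int \<Rightarrow> 'k" where
  "cf v i = v (int_encode i)"

definition VL :: "(nat \<Rightarrow> 'k::field) set" where
  "VL = {v. \<exists>N. \<forall>i<N. cf v i = 0}"

definition phi :: "(nat \<Rightarrow> 'k) \<Rightarrow> (nat \<Rightarrow> 'k)" where
  "phi v = (\<lambda>n. v (int_encode (int_decode n + 1)))"

lemma cf_ext: "(\<And>i. cf v i = cf w i) \<Longrightarrow> v = w"
  unfolding cf_def by (metis ext int_decode_inverse)

lemma cf_phi[simp]: "cf (phi v) i = cf v (i+1)"
  by (simp add: cf_def phi_def)

lemma cf_simps[simp]: "cf (v + w) i = cf v i + cf w i" "cf (v - w) i = cf v i - cf w i"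
  "cf (- v) i = - cf v i" "cf 0 i = 0" "cf (sc c v) i = c * cf v i"
  by (simp_all add: cf_def sc_def)

lemma phi_simps[simp]: "phi (v + w) = phi v + phi w" "phi (v - w) = phi v - phi w"
  "phi (- v) = - phi v" "phi 0 = 0" "phi (sc c v) = sc c (phi v)"
  by (simp_all add: phi_def sc_def fun_eq_iff)

lemma sc_simps[simp]: "sc c (v + w) = sc c v + sc c w" "sc c (v - w) = sc c v - sc c w"
  "sc c (- v) = - sc c v" "sc c 0 = 0" "sc 1 v = v" "sc 0 v = 0" "sc c (sc d v) = sc (c*d) v"
  "sc (-c) v = - sc c v"
  by (simp_all add: sc_def fun_eq_iff algebra_simps)

lemma VL_subsp: "subsp (VL :: (nat \<Rightarrow> 'k::field) set)"
  unfolding subsp_def VL_def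
proof (intro conjI ballI allI)
  show "(0::nat\<Rightarrow>'k) \<in> {v. \<exists>N. \<forall>i<N. cf v i = 0}" by simp
next
  fix x y :: "nat \<Rightarrow> 'k" assume "x \<in> {v. \<exists>N. \<forall>i<N. cf v i = 0}" "y \<in> {v. \<exists>N. \<forall>i<N. cf v i = 0}"
  then obtain N1 N2 where "\<forall>i<N1. cf x i = 0" "\<forall>i<N2. cf y i = 0" by auto
  then show "x + y \<in> {v. \<exists>N. \<forall>i<N. cf v i = 0}"
    by (auto intro!: exI[of _ "min N1 N2"])
next
  fix c and x :: "nat \<Rightarrow> 'k" assume "x \<in> {v. \<exists>N. \<forall>i<N. cf v i = 0}"
  then show "sc c x \<in> {v. \<exists>N. \<forall>i<N. cf v i = 0}" by auto
qed

lemma VL_closed[simp]: "v \<in> VL \<Longrightarrow> w \<in> VL \<Longrightarrow> v + w \<in> VL" "0 \<in> VL"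
  "v \<in> VL \<Longrightarrow> sc c v \<in> VL"
  using VL_subsp unfolding subsp_def by auto

lemma VL_uminus[simp]: "v \<in> VL \<Longrightarrow> - v \<in> VL"
  using VL_closed(3)[of v "-1"] by simp

lemma VL_minus[simp]: "v \<in> VL \<Longrightarrow> w \<in> VL \<Longrightarrow> v - w \<in> VL"
  using VL_closed(1)[of v "-w"] by simp

lemma VL_phi[simp]: "v \<in> VL \<Longrightarrow> phi v \<in> VL"
proof -
  assume "v \<in> VL"
  then obtain N where "\<forall>i<N. cf v i = 0" unfolding VL_def by auto
  then have "\<forall>i<N - 1. cf (phi v) i = 0" by simp
  then show ?thesis unfolding VL_def by blast
qed

definition pairp :: "(nat \<Rightarrow> 'k) \<Rightarrow> (nat \<Rightarrow> 'k) \<Rightarrow> (nat \<Rightarrow> 'k)" where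
  "pairp x y = (\<lambda>n. if even n then x (n div 2) else y (n div 2))"
definition fstp :: "(nat \<Rightarrow> 'k) \<Rightarrow> (nat \<Rightarrow> 'k)" where "fstp v = (\<lambda>n. v (2*n))"
definition sndp :: "(nat \<Rightarrow> 'k) \<Rightarrow> (nat \<Rightarrow> 'k)" where "sndp v = (\<lambda>n. v (2*n+1))"

lemma pair_simps[simp]: "fstp (pairp x y) = x" "sndp (pairp x y) = y"
  "pairp x y + pairp x' y' = pairp (x + x') (y + y')"
  "pairp x y - pairp x' y' = pairp (x - x') (y - y')"
  "- pairp x y = pairp (-x) (-y)"
  "sc c (pairp x y) = pairp (sc c x) (sc c y)"
  "pairp (0::nat\<Rightarrow>'k::field) 0 = 0"
  "fstp (v + w) = fstp v + fstp w" "sndp (v + w) = sndp v + sndp w"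
  "fstp (v - w) = fstp v - fstp w" "sndp (v - w) = sndp v - sndp w"
  "fstp (- v) = - fstp v" "sndp (- v) = - sndp v" "fstp 0 = 0" "sndp 0 = 0"
  "fstp (sc c v) = sc c (fstp v)" "sndp (sc c v) = sc c (sndp v)"
  by (simp_all add: pairp_def fstp_def sndp_def fun_eq_iff sc_def)

lemma pair_eq[simp]: "pairp x y = pairp x' (y'::nat\<Rightarrow>'k::field) \<longleftrightarrow> x = x' \<and> y = y'"
proof
  assume h: "pairp x y = pairp x' y'"
  have "fstp (pairp x y) = fstp (pairp x' y')" "sndp (pairp x y) = sndp (pairp x' y')" using h by simp_all
  then show "x = x' \<and> y = y'" by simp
qed simp

definition PV :: "(nat \<Rightarrow> 'k::field) set" where
  "PV = {pairp x y | x y. x \<in> VL \<and> y \<in> VL}"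

definition NN :: "(nat, 'k::field) cdgB" where
  "NN = \<lparr> car = (\<lambda>n. if n = 0 \<or> n = 1 then VL else {0}),
          eps = (\<lambda>n v. if n = 0 then v else 0),
          dif = (\<lambda>n v. if n = 0 then phi v else 0) \<rparr>"

definition MM :: "(nat, 'k::field) cdgB" where
  "MM = \<lparr> car = (\<lambda>n. if n = 0 then VL else if n = 1 then PV else if n = 2 then VL else {0}),
          eps = (\<lambda>n v. if n = 0 then pairp v 0 else if n = 1 then sndp v else 0),
          dif = (\<lambda>n v. if n = 0 then pairp (phi v) v else if n = 1 then phi (sndp v) - fstp v else 0) \<rparr>"

definition prr :: "int \<Rightarrow> (nat \<Rightarrow> 'k::field) \<Rightarrow> (nat \<Rightarrow> 'k)" where
  "prr n v = (if n = 0 then v else if n = 1 then fstp v else 0)"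

definition ss :: "int \<Rightarrow> (nat \<Rightarrow> 'k::field) \<Rightarrow> (nat \<Rightarrow> 'k)" where
  "ss n v = (if n = 1 then sndp v else if n = 2 then pairp (-v) 0 else 0)"

lemma PV_mem: "v \<in> PV \<Longrightarrow> v = pairp (fstp v) (sndp v) \<and> fstp v \<in> VL \<and> sndp v \<in> VL"
  unfolding PV_def by clarsimp

lemma PV_pair[simp]: "pairp x y \<in> PV \<longleftrightarrow> x \<in> VL \<and> y \<in> VL"
  unfolding PV_def by (simp only: mem_Collect_eq pair_eq) blast

lemma PV_subsp: "subsp (PV :: (nat \<Rightarrow> 'k::field) set)"
  unfolding subsp_def
proof (intro conjI ballI allI)
  show "0 \<in> PV" using PV_pair[of 0 0] by simp
next
  fix x y :: "nat \<Rightarrow> 'k" assume "x \<in> PV" "y \<in> PV"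
  then show "x + y \<in> PV" unfolding PV_def by auto
next
  fix c and x :: "nat \<Rightarrow> 'k" assume "x \<in> PV"
  then show "sc c x \<in> PV" unfolding PV_def by auto
qed

lemma NN_cdg: "is_cdgB (NN :: (nat,'k::field) cdgB)"
  unfolding is_cdgB_def NN_def
  by (auto simp: subsp_def linmap_def VL_subsp)

lemma MM_car: "car MM n = (if n = 0 then VL else if n = 1 then PV else if n = 2 then VL else {0})"
  "eps MM n v = (if n = 0 then pairp v 0 else if n = 1 then sndp v else 0)"
  "dif MM n v = (if n = 0 then pairp (phi v) v else if n = 1 then phi (sndp v) - fstp v else 0)"
  by (simp_all add: MM_def)

lemma PV_ex: "v \<in> PV \<longleftrightarrow> (\<exists>x y. v = pairp x y \<and> x \<in> VL \<and> y \<in> VL)"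
  unfolding PV_def by auto

lemma PV_cases: "v \<in> PV \<Longrightarrow> (\<And>x y. v = pairp x y \<Longrightarrow> x \<in> VL \<Longrightarrow> y \<in> VL \<Longrightarrow> P) \<Longrightarrow> P"
  unfolding PV_def by auto

lemma MM_cdg: "is_cdgB (MM :: (nat,'k::field) cdgB)"
  unfolding is_cdgB_def
proof (intro conjI allI ballI)
  fix n :: int
  show "subsp (car (MM::(nat,'k) cdgB) n)"
    unfolding MM_car by (simp add: VL_subsp PV_subsp subsp_def[of "{0::nat\<Rightarrow>'k}"])
  show "linmap (car (MM::(nat,'k) cdgB) n) (car MM (n+1)) (eps MM n)"
    unfolding linmap_def MM_car by (auto simp: PV_ex)
  show "linmap (car (MM::(nat,'k) cdgB) n) (car MM (n+1)) (dif MM n)"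
    unfolding linmap_def MM_car by (auto simp: PV_ex)
  fix m assume "m \<in> car (MM::(nat,'k) cdgB) n"
  then consider "n = 0" "m \<in> VL" | x y where "n = 1" "m = pairp x y" "x \<in> VL" "y \<in> VL"
     | "n = 2" | "n \<noteq> 0" "n \<noteq> 1" "n \<noteq> 2" "m = 0"
    unfolding MM_car by (auto simp: PV_ex split: if_splits)
  note cs = this
  show "eps MM (n+1) (eps MM n m) = 0" using cs by cases (simp_all add: MM_car)
  show "dif MM (n+1) (dif MM n m) = 0" using cs by cases (simp_all add: MM_car)
  show "dif MM (n + 1) (eps MM n m) = - eps MM (n + 1) (dif MM n m)"
    using cs by cases (simp_all add: MM_car)
qed



definition Fm :: "(nat \<Rightarrow> 'k::field) \<Rightarrow> (nat \<Rightarrow> 'k)" where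
  "Fm q = (\<lambda>n. if int_decode n \<le> 0 then q (nat (- int_decode n)) else 0)"

lemma cf_Fm: "cf (Fm q) i = (if i \<le> 0 then q (nat (-i)) else 0)"
  by (simp add: cf_def Fm_def)

lemma Fm_simps[simp]: "Fm (q + q') = Fm q + Fm q'" "Fm (sc c q) = sc c (Fm q)" "Fm 0 = 0"
  by (auto simp: Fm_def fun_eq_iff sc_def)

lemma Fm_VL: "q \<in> finsupp \<Longrightarrow> Fm q \<in> VL"
proof -
  assume "q \<in> finsupp"
  then have "finite {i. q i \<noteq> 0}" by (simp add: finsupp_def)
  then obtain B where B: "\<forall>j\<in>{i. q i \<noteq> 0}. j \<le> B" using finite_nat_set_iff_bounded_le by blast
  have "\<forall>i< - int B. cf (Fm q) i = 0"
  proof (intro allI impI)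
    fix i :: int assume "i < - int B"
    then have "nat (-i) > B" by linarith
    then have "q (nat (-i)) = 0" using B by force
    then show "cf (Fm q) i = 0" by (simp add: cf_Fm)
  qed
  then show ?thesis unfolding VL_def by blast
qed

lemma Fm_shift: "Fm (shiftx q) = phi (Fm q)"
proof (rule cf_ext)
  fix i :: int
  show "cf (Fm (shiftx q)) i = cf (phi (Fm q)) i"
  proof (cases "i \<le> 0")
    case True
    then show ?thesis
    proof (cases "i = 0")
      case False
      with True have "nat (-i) = Suc (nat (-(i+1)))" by linarith
      with True False show ?thesis by (simp add: cf_Fm shiftx_def)
    qed (simp add: cf_Fm shiftx_def)
  qed (simp add: cf_Fm shiftx_def)
qed

definition fX :: "int \<Rightarrow> (nat \<Rightarrow> 'k::field) \<Rightarrow> (nat \<Rightarrow> 'k)" where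
  "fX n = (if n = 0 \<or> n = 1 then Fm else (\<lambda>_. 0))"

lemma NN_car: "car NN n = (if n = 0 \<or> n = 1 then VL else {0})"
  "eps NN n v = (if n = 0 then v else 0)"
  "dif NN n v = (if n = 0 then phi v else 0)"
  by (simp_all add: NN_def)

lemma X_car: "car Xmod n = (if n = 0 \<or> n = 1 then finsupp else {0})"
  "eps Xmod n v = (if n = 0 then v else 0)"
  "dif Xmod n v = (if n = 0 then shiftx v else 0)"
  by (simp_all add: Xmod_def)

lemma finsupp_closed:
  "q \<in> finsupp \<Longrightarrow> q' \<in> finsupp \<Longrightarrow> q + q' \<in> finsupp"
  "q \<in> finsupp \<Longrightarrow> sc c q \<in> finsupp" "q \<in> finsupp \<Longrightarrow> shiftx q \<in> finsupp"
proof -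
  show "q \<in> finsupp \<Longrightarrow> q' \<in> finsupp \<Longrightarrow> q + q' \<in> finsupp"
    unfolding finsupp_def mem_Collect_eq
    by (intro impI finite_subset[of "{i. (q + q') i \<noteq> 0}" "{i. q i \<noteq> 0} \<union> {i. q' i \<noteq> 0}"]) auto
  show "q \<in> finsupp \<Longrightarrow> sc c q \<in> finsupp"
    unfolding finsupp_def mem_Collect_eq
    by (intro impI finite_subset[of "{i. sc c q i \<noteq> 0}" "{i. q i \<noteq> 0}"]) (auto simp: sc_def)
  assume "q \<in> finsupp"
  then have "finite (Suc ` {i. q i \<noteq> 0})" unfolding finsupp_def by simp
  then show "shiftx q \<in> finsupp"
    unfolding finsupp_def mem_Collect_eq
  proof (rule finite_subset[rotated])
    show "{i. shiftx q i \<noteq> 0} \<subseteq> Suc ` {i. q i \<noteq> 0}"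
    proof
      fix i assume "i \<in> {i. shiftx q i \<noteq> 0}"
      then have "i \<noteq> 0" "q (i - 1) \<noteq> 0" by (auto simp: shiftx_def split: if_splits)
      then show "i \<in> Suc ` {i. q i \<noteq> 0}" by (auto simp: image_iff intro!: bexI[of _ "i - 1"])
    qed
  qed
qed


lemma fX_closed: "closed_morph (Xmod :: (nat,'k::field) cdgB) NN fX"
  unfolding closed_morph_def
proof (intro conjI allI ballI)
  fix n :: int
  show "linmap (car (Xmod :: (nat,'k::field) cdgB) n) (car NN n) (fX n)"
    unfolding linmap_def X_car NN_car fX_def
    by (auto simp: Fm_VL finsupp_closed)
  fix m assume m: "m \<in> car (Xmod :: (nat,'k::field) cdgB) n"
  show "fX (n + 1) (eps Xmod n m) = eps NN n (fX n m)"
    using m by (auto simp: X_car NN_car fX_def split: if_splits)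
  show "fX (n + 1) (dif Xmod n m) = dif NN n (fX n m)"
    using m by (auto simp: X_car NN_car fX_def Fm_shift split: if_splits)
qed

lemma prr_closed: "closed_morph (MM :: (nat,'k::field) cdgB) NN prr"
  unfolding closed_morph_def
proof (intro conjI allI ballI)
  fix n :: int
  show "linmap (car (MM :: (nat,'k::field) cdgB) n) (car NN n) (prr n)"
    unfolding linmap_def MM_car NN_car prr_def
    by (auto simp: PV_ex)
  fix m assume m: "m \<in> car (MM :: (nat,'k::field) cdgB) n"
  show "prr (n + 1) (eps MM n m) = eps NN n (prr n m)"
    using m by (auto simp: MM_car NN_car prr_def PV_ex split: if_splits)
  show "prr (n + 1) (dif MM n m) = dif NN n (prr n m)"
    using m by (auto simp: MM_car NN_car prr_def PV_ex split: if_splits)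
qed

lemma prr_fib: "fibB (MM :: (nat,'k::field) cdgB) NN prr"
  unfolding fibB_def
proof
  fix n :: int
  show "prr n ` car (MM :: (nat,'k::field) cdgB) n = car NN n"
  proof (cases "n = 1")
    case True
    have "VL \<subseteq> fstp ` (PV :: (nat \<Rightarrow> 'k) set)"
    proof
      fix v :: "nat \<Rightarrow> 'k" assume "v \<in> VL"
      then have "pairp v 0 \<in> PV" by simp
      then show "v \<in> fstp ` PV" by (metis image_eqI pair_simps(1))
    qed
    then show ?thesis using True by (auto simp: MM_car NN_car prr_def PV_ex)
  next
    case False
    have "0 \<in> (VL :: (nat \<Rightarrow> 'k) set)" by simp
    then have "0 \<in> (\<lambda>x. 0::nat\<Rightarrow>'k) ` (VL :: (nat \<Rightarrow> 'k) set)" by (rule rev_image_eqI) simp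
    then show ?thesis using False by (auto simp: MM_car NN_car prr_def)
  qed
qed

lemma no_lift: "\<not> (\<exists>g. closed_morph (Xmod :: (nat,'k::field) cdgB) MM g \<and>
    (\<forall>n. \<forall>x\<in>car Xmod n. prr n (g n x) = fX n x))"
proof
  assume "\<exists>g. closed_morph (Xmod :: (nat,'k::field) cdgB) MM g \<and>
    (\<forall>n. \<forall>x\<in>car Xmod n. prr n (g n x) = fX n x)"
  then obtain g where cm: "closed_morph (Xmod :: (nat,'k::field) cdgB) MM g"
    and pg: "\<forall>n. \<forall>x\<in>car Xmod n. prr n (g n x) = fX n x" by blast
  define q :: "nat \<Rightarrow> 'k" where "q = (\<lambda>j. if j = 0 then 1 else 0)"
  have "{i. q i \<noteq> 0} \<subseteq> {0}" unfolding q_def by auto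
  then have qf: "q \<in> finsupp" unfolding finsupp_def using finite_subset by blast
  have sqf: "shiftx q \<in> finsupp" using qf finsupp_closed(3) by blast
  have g0: "g 0 x = Fm x" if "x \<in> finsupp" for x
    using bspec[OF spec[OF pg, of 0], of x] that by (simp add: X_car prr_def fX_def)
  have cmd: "\<forall>n. \<forall>m\<in>car Xmod n. g (n + 1) (dif Xmod n m) = dif MM n (g n m)"
    and cme: "\<forall>n. \<forall>m\<in>car Xmod n. g (n + 1) (eps Xmod n m) = eps MM n (g n m)"
    using cm unfolding closed_morph_def by blast+
  have "g (0+1) (dif Xmod 0 q) = dif MM 0 (g 0 q)"
    using bspec[OF spec[OF cmd, of 0], of q] qf by (simp add: X_car)
  then have e1: "g 1 (shiftx q) = pairp (phi (Fm q)) (Fm q)"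
    using g0[OF qf] by (simp add: X_car MM_car)
  have "g (0+1) (eps Xmod 0 (shiftx q)) = eps MM 0 (g 0 (shiftx q))"
    using bspec[OF spec[OF cme, of 0], of "shiftx q"] sqf by (simp add: X_car)
  then have e2: "g 1 (shiftx q) = pairp (Fm (shiftx q)) 0"
    using g0[OF sqf] by (simp add: X_car MM_car)
  from e1 e2 have "Fm q = 0" by simp
  then have "cf (Fm q) 0 = 0" by simp
  then show False by (simp add: cf_Fm q_def)
qed



definition lin :: "(nat \<Rightarrow> 'k::field) set \<Rightarrow> ((nat \<Rightarrow> 'k) \<Rightarrow> 'k) \<Rightarrow> bool" where
  "lin S g \<longleftrightarrow> (\<forall>x\<in>S. \<forall>y\<in>S. g (x + y) = g x + g y) \<and> (\<forall>c. \<forall>x\<in>S. g (sc c x) = c * g x)"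

lemma sc_add_left: "sc (c + d) v = sc c v + sc d v" "sc (c - d) v = sc c v - sc d v"
  by (simp_all add: sc_def fun_eq_iff algebra_simps)

lemma sc_sum: "sc c (sum f I) = (\<Sum>i\<in>I. sc c (f i))"
  by (simp add: sc_def fun_eq_iff sum_fun_apply sum_distrib_left)

lemma cf_sum: "cf (sum f I) j = (\<Sum>i\<in>I. cf (f i) j)"
  by (simp add: cf_def sum_fun_apply)

lemma subsp_sum:
  assumes "subsp S" "finite I" "\<forall>i\<in>I. x i \<in> S"
  shows "(\<Sum>i\<in>I. sc (c i) (x i)) \<in> S"
  using assms(2,3)
proof (induction I rule: finite_induct)
  case empty
  have "0 \<in> S" using assms(1) by (simp add: subsp_def)
  then show ?case by (simp only: sum.empty)
next
  case (insert a F)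
  have s: "(\<Sum>i\<in>F. sc (c i) (x i)) \<in> S" using insert by simp
  have "x a \<in> S" using insert by simp
  then have "sc (c a) (x a) \<in> S" using assms(1) unfolding subsp_def by blast
  then have "sc (c a) (x a) + (\<Sum>i\<in>F. sc (c i) (x i)) \<in> S" using s assms(1) unfolding subsp_def by blast
  then show ?case unfolding sum.insert[OF insert(1,2)] .
qed

lemma linmap_sum:
  assumes "subsp S" "linmap S S' f" "finite I" "\<forall>i\<in>I. x i \<in> S"
  shows "f (\<Sum>i\<in>I. sc (c i) (x i)) = (\<Sum>i\<in>I. sc (c i) (f (x i)))"
  using assms(3,4)
proof (induction I rule: finite_induct)
  case empty
  have "0 \<in> S" using assms(1) by (simp add: subsp_def)
  then have "f (0 + 0) = f 0 + f 0" using assms(2) unfolding linmap_def by blast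
  then have "f 0 = 0" by (metis add_cancel_right_right add_0)
  then show ?case by (simp only: sum.empty)
next
  case (insert a F)
  have s: "(\<Sum>i\<in>F. sc (c i) (x i)) \<in> S" using subsp_sum[OF assms(1) insert(1)] insert(4) by simp
  have xa: "x a \<in> S" using insert(4) by simp
  then have "sc (c a) (x a) \<in> S" using assms(1) unfolding subsp_def by blast
  then have "f (sc (c a) (x a) + (\<Sum>i\<in>F. sc (c i) (x i))) = f (sc (c a) (x a)) + f (\<Sum>i\<in>F. sc (c i) (x i))"
    "f (sc (c a) (x a)) = sc (c a) (f (x a))"
    using assms(2) s xa unfolding linmap_def by blast+
  note hh = this
  have IH: "f (\<Sum>i\<in>F. sc (c i) (x i)) = (\<Sum>i\<in>F. sc (c i) (f (x i)))" using insert(3,4) by simp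
  show ?case unfolding sum.insert[OF insert(1,2)] by (simp only: hh IH)
qed

lemma lin_sum:
  assumes "subsp S" "lin S f" "finite I" "\<forall>i\<in>I. x i \<in> S"
  shows "f (\<Sum>i\<in>I. sc (c i) (x i)) = (\<Sum>i\<in>I. c i * f (x i))"
  using assms(3,4)
proof (induction I rule: finite_induct)
  case empty
  have "0 \<in> S" using assms(1) by (simp add: subsp_def)
  then have "f (0 + 0) = f 0 + f 0" using assms(2) unfolding lin_def by blast
  then have "f 0 = 0" by (metis add_cancel_right_right add_0)
  then show ?case by (simp only: sum.empty)
next
  case (insert a F)
  have s: "(\<Sum>i\<in>F. sc (c i) (x i)) \<in> S" using subsp_sum[OF assms(1) insert(1)] insert(4) by simp
  have xa: "x a \<in> S" using insert(4) by simp
  then have "sc (c a) (x a) \<in> S" using assms(1) unfolding subsp_def by blast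
  then have "f (sc (c a) (x a) + (\<Sum>i\<in>F. sc (c i) (x i))) = f (sc (c a) (x a)) + f (\<Sum>i\<in>F. sc (c i) (x i))"
    "f (sc (c a) (x a)) = c a * f (x a)"
    using assms(2) s xa unfolding lin_def by blast+
  note hh = this
  have IH: "f (\<Sum>i\<in>F. sc (c i) (x i)) = (\<Sum>i\<in>F. c i * f (x i))" using insert(3,4) by simp
  show ?case unfolding sum.insert[OF insert(1,2)] by (simp only: hh IH)
qed

definition combT :: "('a, 'k::field) cdgB \<Rightarrow> nat \<Rightarrow> (nat \<Rightarrow> int) \<Rightarrow> (nat \<Rightarrow> ('a \<Rightarrow> 'k))
   \<Rightarrow> int \<Rightarrow> (nat \<Rightarrow> 'k) \<Rightarrow> (nat \<Rightarrow> 'k) \<Rightarrow> ('a \<Rightarrow> 'k)" where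
  "combT T r deg gen m a b = (\<Sum>i\<in>{i. i < r \<and> deg i = m}. sc (a i) (gen i)) +
                         (\<Sum>i\<in>{i. i < r \<and> deg i + 1 = m}. sc (b i) (eps T (deg i) (gen i)))"

lemma free_fin_obtain:
  assumes "free_fin T"
  obtains r deg gen where "\<forall>i<r. gen i \<in> car T (deg i)"
    "\<forall>m. \<forall>t\<in>car T m. \<exists>a b. t = combT T r deg gen m a b"
    "\<forall>m a b. combT T r deg gen m a b = 0 \<longrightarrow>
            (\<forall>i<r. (deg i = m \<longrightarrow> a i = 0) \<and> (deg i + 1 = m \<longrightarrow> b i = 0))"
  using assms unfolding free_fin_def combT_def Let_def by blast

lemma combT_diff: "combT T r deg gen m a b - combT T r deg gen m a' b' =
   combT T r deg gen m (\<lambda>i. a i - a' i) (\<lambda>i. b i - b' i)"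
  by (simp add: combT_def sc_add_left sum_subtractf)

lemma combT_add: "combT T r deg gen m a b + combT T r deg gen m a' b' =
   combT T r deg gen m (\<lambda>i. a i + a' i) (\<lambda>i. b i + b' i)"
  by (simp add: combT_def sc_add_left sum.distrib)

lemma combT_sc: "sc c (combT T r deg gen m a b) =
   combT T r deg gen m (\<lambda>i. c * a i) (\<lambda>i. c * b i)"
  by (simp add: combT_def sc_sum)

lemma combT_unique:
  assumes "\<forall>m a b. combT T r deg gen m a b = 0 \<longrightarrow>
            (\<forall>i<r. (deg i = m \<longrightarrow> a i = 0) \<and> (deg i + 1 = m \<longrightarrow> b i = 0))"
    and "combT T r deg gen m a b = combT T r deg gen m a' b'"
  shows "\<forall>i<r. (deg i = m \<longrightarrow> a i = a' i) \<and> (deg i + 1 = m \<longrightarrow> b i = b' i)"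
proof -
  have "combT T r deg gen m (\<lambda>i. a i - a' i) (\<lambda>i. b i - b' i) = 0"
    using assms(2) combT_diff[of T r deg gen m a b a' b'] by simp
  then show ?thesis using assms(1) by force
qed


lemma subsp_ops:
  assumes "subsp S"
  shows "0 \<in> S" "x \<in> S \<Longrightarrow> y \<in> S \<Longrightarrow> x + y \<in> S" "x \<in> S \<Longrightarrow> sc c x \<in> S"
    "x \<in> S \<Longrightarrow> - x \<in> S" "x \<in> S \<Longrightarrow> y \<in> S \<Longrightarrow> x - y \<in> S"
proof -
  show "0 \<in> S" "x \<in> S \<Longrightarrow> y \<in> S \<Longrightarrow> x + y \<in> S" "x \<in> S \<Longrightarrow> sc c x \<in> S"
    using assms unfolding subsp_def by blast+
  show n: "x \<in> S \<Longrightarrow> - x \<in> S" for x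
    using assms unfolding subsp_def by (metis sc_simps(5,8))
  show "x \<in> S \<Longrightarrow> y \<in> S \<Longrightarrow> x - y \<in> S"
    using assms n[of y] unfolding subsp_def by (metis diff_conv_add_uminus)
qed

lemma linmap_ops:
  assumes "linmap S S' f" "subsp S"
  shows "x \<in> S \<Longrightarrow> f x \<in> S'" "x \<in> S \<Longrightarrow> y \<in> S \<Longrightarrow> f (x + y) = f x + f y"
    "x \<in> S \<Longrightarrow> f (sc c x) = sc c (f x)" "f 0 = 0"
    "x \<in> S \<Longrightarrow> f (- x) = - f x" "x \<in> S \<Longrightarrow> y \<in> S \<Longrightarrow> f (x - y) = f x - f y"
proof -
  show "x \<in> S \<Longrightarrow> f x \<in> S'" "x \<in> S \<Longrightarrow> y \<in> S \<Longrightarrow> f (x + y) = f x + f y"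
    "x \<in> S \<Longrightarrow> f (sc c x) = sc c (f x)"
    using assms(1) unfolding linmap_def by blast+
  show n: "x \<in> S \<Longrightarrow> f (- x) = - f x" for x
    using assms(1) unfolding linmap_def by (metis sc_simps(5,8))
  have "f (sc 0 0) = sc 0 (f 0)" using assms subsp_ops(1)[OF assms(2)] unfolding linmap_def by blast
  then show "f 0 = 0" by simp
  show "x \<in> S \<Longrightarrow> y \<in> S \<Longrightarrow> f (x - y) = f x - f y"
    using assms subsp_ops[OF assms(2)] n[of y] unfolding linmap_def by (metis diff_conv_add_uminus)
qed

lemma lin_ops:
  assumes "lin S f" "subsp S"
  shows "x \<in> S \<Longrightarrow> y \<in> S \<Longrightarrow> f (x + y) = f x + f y"
    "x \<in> S \<Longrightarrow> f (sc c x) = c * f x" "f 0 = 0"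
    "x \<in> S \<Longrightarrow> f (- x) = - f x" "x \<in> S \<Longrightarrow> y \<in> S \<Longrightarrow> f (x - y) = f x - f y"
proof -
  show "x \<in> S \<Longrightarrow> y \<in> S \<Longrightarrow> f (x + y) = f x + f y"
    "x \<in> S \<Longrightarrow> f (sc c x) = c * f x"
    using assms(1) unfolding lin_def by blast+
  show n: "x \<in> S \<Longrightarrow> f (- x) = - f x" for x
    using assms(1) unfolding lin_def by (metis sc_simps(5,8) mult_minus_left mult_1)
  have "f (sc 0 0) = 0 * (f 0)" using assms subsp_ops(1)[OF assms(2)] unfolding lin_def by blast
  then show "f 0 = 0" by simp
  show "x \<in> S \<Longrightarrow> y \<in> S \<Longrightarrow> f (x - y) = f x - f y"
    using assms subsp_ops[OF assms(2)] n[of y] unfolding lin_def by (metis diff_conv_add_uminus)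
qed

lemma cdg_facts:
  assumes "is_cdgB T"
  shows "subsp (car T n)" "linmap (car T n) (car T (n+1)) (eps T n)"
    "linmap (car T n) (car T (n+1)) (dif T n)"
    "x \<in> car T n \<Longrightarrow> eps T (n+1) (eps T n x) = 0"
    "x \<in> car T n \<Longrightarrow> dif T (n+1) (dif T n x) = 0"
    "x \<in> car T n \<Longrightarrow> dif T (n+1) (eps T n x) = - eps T (n+1) (dif T n x)"
  using assms unfolding is_cdgB_def by blast+

lemma extend_eps:
  fixes T :: "(nat,'k::field) cdgB"
  assumes T: "is_cdgB T" and ff: "free_fin T"
    and g: "lin (car T m) g" and gv: "\<forall>t\<in>car T (m-1). g (eps T (m-1) t) = 0"
  shows "\<exists>e. lin (car T (m+1)) e \<and> (\<forall>t\<in>car T m. e (eps T m t) = g t)"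
proof -
  obtain r deg gen where gen: "\<forall>i<r. gen i \<in> car T (deg i)"
    and sp: "\<forall>m. \<forall>t\<in>car T m. \<exists>a b. t = combT T r deg gen m a b"
    and un: "\<forall>m a b. combT T r deg gen m a b = 0 \<longrightarrow>
            (\<forall>i<r. (deg i = m \<longrightarrow> a i = 0) \<and> (deg i + 1 = m \<longrightarrow> b i = 0))"
    using free_fin_obtain[OF ff] by metis
  let ?C = "combT T r deg gen"
  define I0 where "I0 = {i. i < r \<and> deg i = m}"
  define I1 where "I1 = {i. i < r \<and> deg i + 1 = m}"
  have fin: "finite I0" "finite I1" unfolding I0_def I1_def by simp_all
  define cB where "cB t = snd (SOME ab. t = ?C (m+1) (fst ab) (snd ab))" for t
  define e where "e t = (\<Sum>i\<in>I0. cB t i * g (gen i))" for t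
  have cB: "\<forall>i\<in>I0. cB t i = b i" if "t \<in> car T (m+1)" "t = ?C (m+1) a b" for t a b
  proof -
    have "\<exists>ab. t = ?C (m+1) (fst ab) (snd ab)" using sp that(1) by auto
    then have "t = ?C (m+1) (fst (SOME ab. t = ?C (m+1) (fst ab) (snd ab))) (cB t)"
      unfolding cB_def by (rule someI_ex)
    then have "?C (m+1) a b = ?C (m+1) (fst (SOME ab. t = ?C (m+1) (fst ab) (snd ab))) (cB t)"
      using that(2) by simp
    from combT_unique[OF un this] show ?thesis unfolding I0_def by auto
  qed
  note sT = cdg_facts(1)[OF T]
  have lin_e: "lin (car T (m+1)) e"
    unfolding lin_def
  proof (intro conjI ballI allI)
    fix x y assume x: "x \<in> car T (m+1)" and y: "y \<in> car T (m+1)"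
    obtain a b where xa: "x = ?C (m+1) a b" using sp x by blast
    obtain a' b' where ya: "y = ?C (m+1) a' b'" using sp y by blast
    have xy: "x + y \<in> car T (m+1)" using subsp_ops(2)[OF sT x y] .
    have "x + y = ?C (m+1) (\<lambda>i. a i + a' i) (\<lambda>i. b i + b' i)" using xa ya combT_add by simp
    then have h1: "\<forall>i\<in>I0. cB (x+y) i = b i + b' i" using cB[OF xy] by blast
    have h2: "\<forall>i\<in>I0. cB x i = b i" using cB[OF x xa] .
    have h3: "\<forall>i\<in>I0. cB y i = b' i" using cB[OF y ya] .
    have "e (x + y) = (\<Sum>i\<in>I0. b i * g (gen i) + b' i * g (gen i))"
      unfolding e_def using h1 by (auto intro!: sum.cong simp: algebra_simps)
    also have "\<dots> = e x + e y" unfolding e_def sum.distrib using h2 h3 by (auto intro!: sum.cong arg_cong2[where f="(+)"])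
    finally show "e (x + y) = e x + e y" .
  next
    fix c x assume x: "x \<in> car T (m+1)"
    obtain a b where xa: "x = ?C (m+1) a b" using sp x by blast
    have xy: "sc c x \<in> car T (m+1)" using subsp_ops(3)[OF sT x] .
    have "sc c x = ?C (m+1) (\<lambda>i. c * a i) (\<lambda>i. c * b i)" using xa combT_sc by simp
    then have h1: "\<forall>i\<in>I0. cB (sc c x) i = c * b i" using cB[OF xy] by blast
    have h2: "\<forall>i\<in>I0. cB x i = b i" using cB[OF x xa] .
    show "e (sc c x) = c * e x"
      unfolding e_def sum_distrib_left using h1 h2 by (auto intro!: sum.cong simp: algebra_simps)
  qed
  have main: "e (eps T m t) = g t" if t: "t \<in> car T m" for t
  proof -
    obtain a b where ta: "t = ?C m a b" using sp t by blast
    have g0: "\<forall>i\<in>I0. gen i \<in> car T m" using gen unfolding I0_def by auto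
    have g1: "\<forall>i\<in>I1. eps T (deg i) (gen i) \<in> car T m"
      using gen linmap_ops(1)[OF cdg_facts(2)[OF T] sT] unfolding I1_def by fastforce
    have s0: "(\<Sum>i\<in>I0. sc (a i) (gen i)) \<in> car T m" by (rule subsp_sum[OF sT fin(1) g0])
    have s1: "(\<Sum>i\<in>I1. sc (b i) (eps T (deg i) (gen i))) \<in> car T m" by (rule subsp_sum[OF sT fin(2) g1])
    have tt: "t = (\<Sum>i\<in>I0. sc (a i) (gen i)) + (\<Sum>i\<in>I1. sc (b i) (eps T (deg i) (gen i)))"
      using ta unfolding combT_def I0_def I1_def .
    note eL = linmap_ops[OF cdg_facts(2)[OF T, where n=m] sT[where n=m]]
    have "eps T m t = (\<Sum>i\<in>I0. sc (a i) (eps T m (gen i))) + (\<Sum>i\<in>I1. sc (b i) (eps T m (eps T (deg i) (gen i))))"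
      unfolding tt eL(2)[OF s0 s1] linmap_sum[OF sT cdg_facts(2)[OF T] fin(1) g0]
        linmap_sum[OF sT cdg_facts(2)[OF T] fin(2) g1] ..
    also have "(\<Sum>i\<in>I1. sc (b i) (eps T m (eps T (deg i) (gen i)))) = 0"
    proof (rule sum.neutral, intro ballI)
      fix i assume "i \<in> I1"
      then have "deg i + 1 = m" "gen i \<in> car T (deg i)" using gen unfolding I1_def by auto
      then show "sc (b i) (eps T m (eps T (deg i) (gen i))) = 0" using cdg_facts(4)[OF T] by auto
    qed
    also have "(\<Sum>i\<in>I0. sc (a i) (eps T m (gen i))) = (\<Sum>i\<in>I0. sc (a i) (eps T (deg i) (gen i)))"
      unfolding I0_def by (rule sum.cong) auto
    finally have et: "eps T m t = ?C (m+1) (\<lambda>_. 0) a"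
      unfolding combT_def I0_def by simp
    have eT: "eps T m t \<in> car T (m+1)" using eL(1)[OF t] .
    have "e (eps T m t) = (\<Sum>i\<in>I0. a i * g (gen i))"
      unfolding e_def using cB[OF eT et] by (auto intro!: sum.cong)
    also have "g t = (\<Sum>i\<in>I0. a i * g (gen i)) + (\<Sum>i\<in>I1. b i * g (eps T (deg i) (gen i)))"
      unfolding tt lin_ops(1)[OF g sT s0 s1] lin_sum[OF sT g fin(1) g0] lin_sum[OF sT g fin(2) g1] ..
    also have "(\<Sum>i\<in>I1. b i * g (eps T (deg i) (gen i))) = 0"
    proof (rule sum.neutral, intro ballI)
      fix i assume "i \<in> I1"
      then have "deg i = m - 1" "gen i \<in> car T (m - 1)" using gen unfolding I1_def by auto
      then show "b i * g (eps T (deg i) (gen i)) = 0" using gv by auto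
    qed
    finally show ?thesis by simp
  qed
  show ?thesis using lin_e main by blast
qed



lemma finite_bound:
  assumes "finite I" "\<forall>i\<in>I. \<exists>N::int. \<forall>j<N. P i j"
  shows "\<exists>N. \<forall>i\<in>I. \<forall>j<N. P i j"
  using assms
proof (induction I rule: finite_induct)
  case empty then show ?case by auto
next
  case (insert x F)
  then obtain N1 where N1: "\<forall>i\<in>F. \<forall>j<N1. P i j" by auto
  obtain N2 where N2: "\<forall>j<N2. P x j" using insert(4) by auto
  show ?case using N1 N2 by (intro exI[of _ "min N1 N2"]) auto
qed

lemma lower_bound:
  fixes T :: "(nat,'k::field) cdgB"
  assumes T: "is_cdgB T" and ff: "free_fin T" and a: "linmap (car T n) VL a"
  shows "\<exists>N. \<forall>t\<in>car T n. \<forall>i<N. cf (a t) i = 0"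
proof -
  obtain r deg gen where gen: "\<forall>i<r. gen i \<in> car T (deg i)"
    and sp: "\<forall>m. \<forall>t\<in>car T m. \<exists>a b. t = combT T r deg gen m a b"
    using free_fin_obtain[OF ff] by metis
  define I0 where "I0 = {i. i < r \<and> deg i = n}"
  define I1 where "I1 = {i. i < r \<and> deg i + 1 = n}"
  have fin: "finite I0" "finite I1" unfolding I0_def I1_def by simp_all
  note sT = cdg_facts(1)[OF T]
  have g0: "\<forall>i\<in>I0. gen i \<in> car T n" using gen unfolding I0_def by auto
  have g1: "\<forall>i\<in>I1. eps T (deg i) (gen i) \<in> car T n"
    using gen linmap_ops(1)[OF cdg_facts(2)[OF T] sT] unfolding I1_def by fastforce
  have "\<forall>i\<in>{..<r}. \<exists>N::int. \<forall>j<N. (i \<in> I0 \<longrightarrow> cf (a (gen i)) j = 0) \<and>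
        (i \<in> I1 \<longrightarrow> cf (a (eps T (deg i) (gen i))) j = 0)"
  proof
    fix i assume "i \<in> {..<r}"
    show "\<exists>N::int. \<forall>j<N. (i \<in> I0 \<longrightarrow> cf (a (gen i)) j = 0) \<and>
        (i \<in> I1 \<longrightarrow> cf (a (eps T (deg i) (gen i))) j = 0)"
    proof (cases "i \<in> I0")
      case True
      then have "i \<notin> I1" unfolding I0_def I1_def by auto
      have "a (gen i) \<in> VL" using linmap_ops(1)[OF a sT] g0 True by blast
      then obtain N where N: "\<forall>j<N. cf (a (gen i)) j = 0" unfolding VL_def by blast
      show ?thesis by (rule exI[of _ N]) (simp add: N \<open>i \<notin> I1\<close>)
    next
      case False
      show ?thesis
      proof (cases "i \<in> I1")
        case True
        have "a (eps T (deg i) (gen i)) \<in> VL" using linmap_ops(1)[OF a sT] g1 True by blast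
        then obtain N where N: "\<forall>j<N. cf (a (eps T (deg i) (gen i))) j = 0" unfolding VL_def by blast
        show ?thesis by (rule exI[of _ N]) (simp add: N False)
      qed (rule exI[of _ 0], simp add: False)
    qed
  qed
  then have "\<exists>N. \<forall>i\<in>{..<r}. \<forall>j<N. (i \<in> I0 \<longrightarrow> cf (a (gen i)) j = 0) \<and>
        (i \<in> I1 \<longrightarrow> cf (a (eps T (deg i) (gen i))) j = 0)"
    by (rule finite_bound[OF finite_lessThan])
  then obtain N where N: "\<forall>i\<in>{..<r}. \<forall>j<N. (i \<in> I0 \<longrightarrow> cf (a (gen i)) j = 0) \<and>
        (i \<in> I1 \<longrightarrow> cf (a (eps T (deg i) (gen i))) j = 0)" by (elim exE)
  have "\<forall>t\<in>car T n. \<forall>j<N. cf (a t) j = 0"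
  proof (intro ballI allI impI)
    fix t j assume t: "t \<in> car T n" and j: "j < N"
    obtain al be where "t = combT T r deg gen n al be" using sp t by blast
    then have tt: "t = (\<Sum>i\<in>I0. sc (al i) (gen i)) + (\<Sum>i\<in>I1. sc (be i) (eps T (deg i) (gen i)))"
      unfolding combT_def I0_def I1_def .
    have s0: "(\<Sum>i\<in>I0. sc (al i) (gen i)) \<in> car T n" by (rule subsp_sum[OF sT fin(1) g0])
    have s1: "(\<Sum>i\<in>I1. sc (be i) (eps T (deg i) (gen i))) \<in> car T n" by (rule subsp_sum[OF sT fin(2) g1])
    have "a t = (\<Sum>i\<in>I0. sc (al i) (a (gen i))) + (\<Sum>i\<in>I1. sc (be i) (a (eps T (deg i) (gen i))))"
      unfolding tt linmap_ops(2)[OF a sT s0 s1] linmap_sum[OF sT a fin(1) g0]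
        linmap_sum[OF sT a fin(2) g1] ..
    then have "cf (a t) j = (\<Sum>i\<in>I0. al i * cf (a (gen i)) j) + (\<Sum>i\<in>I1. be i * cf (a (eps T (deg i) (gen i))) j)"
      by (simp add: cf_sum)
    also have "\<dots> = 0"
      using N j unfolding I0_def I1_def by (simp add: sum.neutral)
    finally show "cf (a t) j = 0" .
  qed
  then show ?thesis by blast
qed


primrec Erec :: "(nat,'k::field) cdgB \<Rightarrow> int \<Rightarrow> 'k \<Rightarrow> (int \<Rightarrow> (nat \<Rightarrow> 'k) \<Rightarrow> 'k) \<Rightarrow> int
   \<Rightarrow> nat \<Rightarrow> ((nat \<Rightarrow> 'k) \<Rightarrow> 'k)" where
  "Erec T m \<sigma> bb N0 0 = (\<lambda>_. 0)"
| "Erec T m \<sigma> bb N0 (Suc j) = (SOME e. lin (car T (m+1)) e \<and>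
     (\<forall>t\<in>car T m. e (eps T m t) = - \<sigma> * bb (N0 + int j) t + Erec T m \<sigma> bb N0 j (dif T m t)))"

lemma lin_zero_fun: "lin S (\<lambda>_. 0)"
  unfolding lin_def by simp

lemma core:
  fixes T :: "(nat,'k::field) cdgB" and \<sigma> :: 'k
  assumes T: "is_cdgB T" and ff: "free_fin T" and s2: "\<sigma> * \<sigma> = 1"
   and a: "linmap (car T (m-1)) VL a" and b: "linmap (car T m) VL b"
   and C2: "\<forall>t\<in>car T (m-1). b (eps T (m-1) t) = sc \<sigma> (a t)"
   and C4: "\<forall>t\<in>car T (m-1). phi (a t) = sc \<sigma> (b (dif T (m-1) t))"
  shows "\<exists>c e. linmap (car T m) VL c \<and> linmap (car T (m+1)) VL e \<and>
     (\<forall>t\<in>car T (m-1). c (eps T (m-1) t) = 0) \<and>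
     (\<forall>t\<in>car T m. e (eps T m t) = sc (-\<sigma>) (c t)) \<and>
     (\<forall>t\<in>car T (m-1). a t = sc \<sigma> (c (dif T (m-1) t))) \<and>
     (\<forall>t\<in>car T m. b t = phi (c t) + sc \<sigma> (e (dif T m t)))"
proof -
  obtain N0 where Nb: "\<forall>t\<in>car T m. \<forall>i<N0. cf (b t) i = 0"
    using lower_bound[OF T ff b] by blast
  note sT = cdg_facts(1)[OF T]
  define bb where "bb i t = cf (b t) i" for i t
  define aa where "aa i t = cf (a t) i" for i t
  define E where "E = Erec T m \<sigma> bb N0"
  define ee where "ee i = (if i \<le> N0 then (\<lambda>_. 0) else E (nat (i - N0)))" for i
  define cc where "cc i t = bb (i-1) t - \<sigma> * ee (i-1) (dif T m t)" for i t
  have m1: "m - 1 + 1 = m" by simp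
  have dL: "linmap (car T m) (car T (m+1)) (dif T m)" using cdg_facts(3)[OF T] .
  have dL1: "linmap (car T (m-1)) (car T m) (dif T (m-1))" using cdg_facts(3)[OF T, of "m-1"] by simp
  have eL1: "linmap (car T (m-1)) (car T m) (eps T (m-1))" using cdg_facts(2)[OF T, of "m-1"] by simp
  have ddz: "dif T m (dif T (m-1) t) = 0" if "t \<in> car T (m-1)" for t
    using cdg_facts(5)[OF T that] by simp
  have de: "dif T m (eps T (m-1) t) = - eps T m (dif T (m-1) t)" if "t \<in> car T (m-1)" for t
    using cdg_facts(6)[OF T that] by simp
  have bbl: "lin (car T m) (bb i)" for i
    unfolding lin_def bb_def using linmap_ops[OF b sT] by simp
  have bb0: "bb i t = 0" if "t \<in> car T m" "i < N0" for i t
    using Nb that unfolding bb_def by blast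
  have C2': "bb i (eps T (m-1) t) = \<sigma> * aa i t" if "t \<in> car T (m-1)" for i t
    using C2 that unfolding bb_def aa_def by simp
  have C4': "aa (i+1) t = \<sigma> * bb i (dif T (m-1) t)" if "t \<in> car T (m-1)" for i t
  proof -
    have "cf (phi (a t)) i = cf (sc \<sigma> (b (dif T (m-1) t))) i" using C4 that by simp
    then show ?thesis unfolding aa_def bb_def by simp
  qed
  have ee_E: "ee (N0 + int j) = E j" for j
    unfolding ee_def by (cases "j = 0") (simp_all add: E_def)
  have ee_low: "ee i = (\<lambda>_. 0)" if "i \<le> N0" for i
    unfolding ee_def using that by simp
  have cc_suc: "cc (k+1) t = bb k t - \<sigma> * ee k (dif T m t)" for k t
    unfolding cc_def by simp
  have keyA: "\<forall>t\<in>car T (m-1). cc (k+1) (eps T (m-1) t) = 0"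
    if L: "lin (car T (m+1)) (ee k)" and H: "\<forall>s\<in>car T m. ee k (eps T m s) = - \<sigma> * cc k s"
      and Z: "ee (k-1) 0 = 0" for k
  proof
    fix t assume t: "t \<in> car T (m-1)"
    have dt: "dif T (m-1) t \<in> car T m" using linmap_ops(1)[OF dL1 sT t] .
    have edt: "eps T m (dif T (m-1) t) \<in> car T (m+1)"
      using linmap_ops(1)[OF cdg_facts(2)[OF T] sT dt] .
    have "cc (k+1) (eps T (m-1) t) = \<sigma> * aa k t - \<sigma> * ee k (- eps T m (dif T (m-1) t))"
      unfolding cc_suc C2'[OF t] de[OF t] ..
    also have "\<dots> = \<sigma> * aa k t + \<sigma> * (- \<sigma> * cc k (dif T (m-1) t))"
      using lin_ops(4)[OF L sT edt] H dt by simp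
    also have "cc k (dif T (m-1) t) = bb (k-1) (dif T (m-1) t)"
      unfolding cc_def ddz[OF t] Z by simp
    also have "aa k t = \<sigma> * bb (k-1) (dif T (m-1) t)"
      using C4'[OF t, of "k-1"] by simp
    finally show "cc (k+1) (eps T (m-1) t) = 0"
      by (simp add: algebra_simps s2 mult.assoc[symmetric])
  qed
  define Q where "Q j \<longleftrightarrow> lin (car T (m+1)) (E j) \<and>
      (\<forall>s\<in>car T m. E j (eps T m s) = - \<sigma> * cc (N0 + int j) s)" for j
  have Qall: "\<forall>j'\<le>j. Q j'" for j
  proof (induction j)
    case 0
    have "lin (car T (m+1)) (E 0)" unfolding E_def by (simp add: lin_zero_fun)
    moreover have "\<forall>s\<in>car T m. E 0 (eps T m s) = - \<sigma> * cc (N0 + int 0) s"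
      unfolding cc_def using bb0 ee_low[of "N0 - 1"] by (simp add: E_def)
    ultimately show ?case unfolding Q_def by simp
  next
    case (Suc j)
    have Qj: "Q j" using Suc by simp
    have LE: "lin (car T (m+1)) (E j)" using Qj unfolding Q_def by simp
    define g where "g t = - \<sigma> * bb (N0 + int j) t + E j (dif T m t)" for t
    have g_cc: "g t = - \<sigma> * cc (N0 + int j + 1) t" for t
      unfolding g_def cc_suc ee_E by (simp add: algebra_simps s2 mult.assoc[symmetric])
    have lg: "lin (car T m) g"
      unfolding lin_def g_def
      using lin_ops[OF bbl sT] lin_ops[OF LE sT] linmap_ops[OF dL sT]
      by (simp add: algebra_simps)
    have Z: "ee (N0 + int j - 1) 0 = 0"
    proof (cases j)
      case 0 then show ?thesis using ee_low[of "N0 - 1"] by simp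
    next
      case (Suc j')
      then have "N0 + int j - 1 = N0 + int j'" by simp
      moreover have "Q j'" using Suc.IH Suc by simp
      ultimately show ?thesis using lin_ops(3)[OF _ sT] ee_E unfolding Q_def by metis
    qed
    have gv: "\<forall>t\<in>car T (m-1). g (eps T (m-1) t) = 0"
      using keyA[of "N0 + int j", OF _ _ Z] Qj unfolding Q_def ee_E g_cc by simp
    have "\<exists>e. lin (car T (m+1)) e \<and> (\<forall>t\<in>car T m. e (eps T m t) = g t)"
      by (rule extend_eps[OF T ff lg gv])
    then have "lin (car T (m+1)) (E (Suc j)) \<and> (\<forall>t\<in>car T m. E (Suc j) (eps T m t) = g t)"
      unfolding E_def Erec.simps g_def[abs_def] bb_def[abs_def] by (rule someI_ex)
    moreover have eqS: "N0 + int (Suc j) = N0 + int j + 1" by simp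
    ultimately have "Q (Suc j)" unfolding Q_def g_cc eqS by simp
    then show ?case using Suc le_Suc_eq by auto
  qed
  have QJ: "Q j" for j using Qall[of j] by simp
  have eeL: "lin (car T (m+1)) (ee i)" for i
  proof (cases "i \<le> N0")
    case True then show ?thesis using ee_low lin_zero_fun by simp
  next
    case False
    then have "i = N0 + int (nat (i - N0))" by simp
    then show ?thesis using QJ[of "nat (i - N0)"] ee_E unfolding Q_def by metis
  qed
  have H2all: "\<forall>s\<in>car T m. ee i (eps T m s) = - \<sigma> * cc i s" for i
  proof (cases "i \<le> N0")
    case True
    then show ?thesis unfolding cc_def using ee_low[of i] ee_low[of "i-1"] bb0 by simp
  next
    case False
    then have "i = N0 + int (nat (i - N0))" by simp
    then show ?thesis using QJ[of "nat (i - N0)"] ee_E unfolding Q_def by metis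
  qed
  have ee0: "ee i 0 = 0" for i using lin_ops(3)[OF eeL sT] .
  have H1all: "\<forall>t\<in>car T (m-1). cc i (eps T (m-1) t) = 0" for i
    using keyA[OF eeL H2all ee0, of "i - 1"] by simp
  have ccL: "lin (car T m) (cc i)" for i
    unfolding lin_def cc_def
    using lin_ops[OF bbl sT] lin_ops[OF eeL sT] linmap_ops[OF dL sT]
    by (simp add: algebra_simps)
  have cc0: "cc i t = 0" if "t \<in> car T m" "i \<le> N0" for i t
    unfolding cc_def using that bb0 ee_low[of "i-1"] by simp
  define c where "c t = (\<lambda>n. cc (int_decode n) t)" for t
  define e where "e t = (\<lambda>n. ee (int_decode n) t)" for t
  have cf_c: "cf (c t) i = cc i t" for t i unfolding c_def cf_def by simp
  have cf_e: "cf (e t) i = ee i t" for t i unfolding e_def cf_def by simp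
  have lc: "linmap (car T m) VL c"
    unfolding linmap_def
  proof (intro conjI ballI allI)
    fix x assume x: "x \<in> car T m"
    have "\<forall>i<N0. cf (c x) i = 0" using cc0[OF x] cf_c by simp
    then show "c x \<in> VL" unfolding VL_def by blast
  next
    fix x y assume "x \<in> car T m" "y \<in> car T m"
    then show "c (x + y) = c x + c y" using lin_ops(1)[OF ccL sT] by (intro cf_ext) (simp add: cf_c)
  next
    fix k x assume "x \<in> car T m"
    then show "c (sc k x) = sc k (c x)" using lin_ops(2)[OF ccL sT] by (intro cf_ext) (simp add: cf_c)
  qed
  have le: "linmap (car T (m+1)) VL e"
    unfolding linmap_def
  proof (intro conjI ballI allI)
    fix x assume x: "x \<in> car T (m+1)"
    have "\<forall>i<N0. cf (e x) i = 0" using ee_low cf_e by simp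
    then show "e x \<in> VL" unfolding VL_def by blast
  next
    fix x y assume "x \<in> car T (m+1)" "y \<in> car T (m+1)"
    then show "e (x + y) = e x + e y" using lin_ops(1)[OF eeL sT] by (intro cf_ext) (simp add: cf_e)
  next
    fix k x assume "x \<in> car T (m+1)"
    then show "e (sc k x) = sc k (e x)" using lin_ops(2)[OF eeL sT] by (intro cf_ext) (simp add: cf_e)
  qed
  have H1: "\<forall>t\<in>car T (m-1). c (eps T (m-1) t) = 0"
    using H1all by (auto intro!: cf_ext simp: cf_c)
  have H2: "\<forall>t\<in>car T m. e (eps T m t) = sc (-\<sigma>) (c t)"
    using H2all by (auto intro!: cf_ext simp: cf_c cf_e)
  have R1: "\<forall>t\<in>car T (m-1). a t = sc \<sigma> (c (dif T (m-1) t))"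
  proof
    fix t assume t: "t \<in> car T (m-1)"
    show "a t = sc \<sigma> (c (dif T (m-1) t))"
    proof (rule cf_ext)
      fix i
      have "cf (sc \<sigma> (c (dif T (m-1) t))) i = \<sigma> * bb (i-1) (dif T (m-1) t)"
        unfolding cf_simps cf_c cc_def ddz[OF t] ee0 by simp
      also have "\<dots> = aa i t" using C4'[OF t, of "i-1"] by simp
      finally show "cf (a t) i = cf (sc \<sigma> (c (dif T (m-1) t))) i" unfolding aa_def by simp
    qed
  qed
  have R2: "\<forall>t\<in>car T m. b t = phi (c t) + sc \<sigma> (e (dif T m t))"
    by (auto intro!: cf_ext simp: cf_c cf_e cc_suc bb_def)
  show ?thesis using lc le H1 H2 R1 R2 by blast
qed



lemma ksign_sq: "ksign p * ksign p = (1::'k::field)"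
  by (simp add: ksign_def)

lemma ksign_pred: "ksign (p - 1) = - (ksign p :: 'k::field)"
  by (simp add: ksign_def)

lemma MM_lin:
  "eps MM k (x + y) = eps MM k x + eps MM k y" "eps MM k (sc c x) = sc c (eps MM k x)"
  "eps MM k (0::nat\<Rightarrow>'k::field) = 0"
  "dif MM k (x + y) = dif MM k x + dif MM k y" "dif MM k (sc c x) = sc c (dif MM k x)"
  "dif MM k (0::nat\<Rightarrow>'k::field) = 0"
  "ss k (x + y) = ss k x + ss k y" "ss k (sc c x) = sc c (ss k x)"
  "ss k (0::nat\<Rightarrow>'k::field) = 0"
  by (simp_all add: MM_car ss_def algebra_simps)

lemma ss_props:
  assumes x: "x \<in> car (MM :: (nat,'k::field) cdgB) k"
  shows "ss k x \<in> car (MM :: (nat,'k::field) cdgB) (k-1)"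
    "ss (k+1) (eps MM k x) = - eps MM (k-1) (ss k x)"
    "dif MM (k-1) (ss k x) + ss (k+1) (dif MM k x) = x"
proof -
  consider "k = 0" "x \<in> VL" | u w where "k = 1" "x = pairp u w" "u \<in> VL" "w \<in> VL"
     | "k = 2" "x \<in> VL" | "k \<noteq> 0" "k \<noteq> 1" "k \<noteq> 2" "x = 0"
    using x unfolding MM_car by (auto simp: PV_ex split: if_splits)
  note cs = this
  show "ss k x \<in> car (MM :: (nat,'k::field) cdgB) (k-1)"
    using cs by cases (simp_all add: MM_car ss_def VL_subsp[THEN subsp_ops(1)])
  show "ss (k+1) (eps MM k x) = - eps MM (k-1) (ss k x)"
    using cs by cases (simp_all add: MM_car ss_def)
  show "dif MM (k-1) (ss k x) + ss (k+1) (dif MM k x) = x"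
    using cs by cases (simp_all add: MM_car ss_def)
qed

lemma MM_car_zero: "0 \<in> car (MM :: (nat,'k::field) cdgB) k"
  using subsp_ops(1)[OF cdg_facts(1)[OF MM_cdg]] .

lemma MM_acyclic:
  fixes T :: "(nat,'k::field) cdgB"
  assumes T: "is_cdgB T" and hz: "homB T MM p z" and cz: "heq T (homD T MM p z) (\<lambda>_ _. 0)"
  shows "\<exists>h. homB T MM (p-1) h \<and> heq T z (homD T MM (p-1) h)"
proof -
  define \<sigma> :: 'k where "\<sigma> = ksign p"
  have s2: "\<sigma> * \<sigma> = 1" unfolding \<sigma>_def by (rule ksign_sq)
  have HL: "linmap (car T n) (car MM (n+p)) (z n)" for n using hz unfolding homB_def by blast
  have HE: "z (n+1) (eps T n x) = sc \<sigma> (eps MM (n+p) (z n x))" if "x \<in> car T n" for n x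
    using hz that unfolding homB_def \<sigma>_def by blast
  have HD: "dif MM (n+p) (z n x) - sc \<sigma> (z (n+1) (dif T n x)) = 0" if "x \<in> car T n" for n x
    using cz that unfolding heq_def homD_def \<sigma>_def by blast
  note sT = cdg_facts(1)[OF T]
  define h where "h n t = ss (n+p) (z n t)" for n t
  have hB: "homB T MM (p-1) h"
    unfolding homB_def
  proof (intro conjI allI ballI)
    fix n
    have e: "n + (p - 1) = n + p - 1" by simp
    show "linmap (car T n) (car MM (n + (p - 1))) (h n)"
      unfolding linmap_def h_def e
    proof (intro conjI ballI allI)
      fix x y assume x: "x \<in> car T n" and y: "y \<in> car T n"
      show "ss (n + p) (z n x) \<in> car MM (n + p - 1)"
        by (rule ss_props(1)[OF linmap_ops(1)[OF HL sT x]])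
      show "ss (n + p) (z n (x + y)) = ss (n + p) (z n x) + ss (n + p) (z n y)"
        unfolding linmap_ops(2)[OF HL sT x y] MM_lin ..
    next
      fix c x assume x: "x \<in> car T n"
      show "ss (n + p) (z n (sc c x)) = sc c (ss (n + p) (z n x))"
        unfolding linmap_ops(3)[OF HL sT x] MM_lin ..
    qed
    fix x assume x: "x \<in> car T n"
    have zx: "z n x \<in> car MM (n+p)" using linmap_ops(1)[OF HL sT x] .
    have e2: "n + 1 + p = n + p + 1" by simp
    show "h (n + 1) (eps T n x) = sc (ksign (p - 1)) (eps MM (n + (p - 1)) (h n x))"
      unfolding h_def HE[OF x] e e2 MM_lin ss_props(2)[OF zx] ksign_pred \<sigma>_def by simp
  qed
  have "heq T z (homD T MM (p-1) h)"
    unfolding heq_def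
  proof (intro allI ballI)
    fix n x assume x: "x \<in> car T n"
    have zx: "z n x \<in> car MM (n+p)" using linmap_ops(1)[OF HL sT x] .
    have e: "n + (p - 1) = n + p - 1" "n + 1 + p = n + p + 1" by simp_all
    have zd: "z (n+1) (dif T n x) = sc \<sigma> (dif MM (n+p) (z n x))"
    proof -
      have "sc \<sigma> (dif MM (n+p) (z n x)) = sc \<sigma> (sc \<sigma> (z (n+1) (dif T n x)))"
        using HD[OF x] by (metis eq_iff_diff_eq_0)
      then show ?thesis using s2 by simp
    qed
    show "z n x = homD T MM (p - 1) h n x"
      unfolding homD_def h_def e zd ksign_pred \<sigma>_def[symmetric] MM_lin
      using ss_props(3)[OF zx] s2 by simp
  qed
  then show ?thesis using hB by blast
qed


lemma linmap_VL_neg: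
  assumes "linmap S VL f" "subsp S"
  shows "linmap S VL (\<lambda>t. - f t)"
  using linmap_ops[OF assms] unfolding linmap_def by simp

lemma NN_lin: "eps NN k (0::nat\<Rightarrow>'k::field) = 0" "dif NN k (0::nat\<Rightarrow>'k::field) = 0"
  by (simp_all add: NN_car)

lemma NN_acyclic:
  fixes T :: "(nat,'k::field) cdgB"
  assumes T: "is_cdgB T" and ff: "free_fin T"
    and hz: "homB T NN p z" and cz: "heq T (homD T NN p z) (\<lambda>_ _. 0)"
  shows "\<exists>h. homB T NN (p-1) h \<and> heq T (\<lambda>n t. - z n t) (homD T NN (p-1) h)"
proof -
  define \<sigma> :: 'k where "\<sigma> = ksign p"
  have s2: "\<sigma> * \<sigma> = 1" unfolding \<sigma>_def by (rule ksign_sq)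
  have HL: "linmap (car T n) (car NN (n+p)) (z n)" for n using hz unfolding homB_def by blast
  have HE: "z (n+1) (eps T n x) = sc \<sigma> (eps NN (n+p) (z n x))" if "x \<in> car T n" for n x
    using hz that unfolding homB_def \<sigma>_def by blast
  have HD: "dif NN (n+p) (z n x) - sc \<sigma> (z (n+1) (dif T n x)) = 0" if "x \<in> car T n" for n x
    using cz that unfolding heq_def homD_def \<sigma>_def by blast
  note sT = cdg_facts(1)[OF T]
  have z0: "z n x = 0" if "x \<in> car T n" "n + p \<noteq> 0" "n + p \<noteq> 1" for n x
    using linmap_ops(1)[OF HL sT that(1)] that(2,3) by (simp add: NN_car)
  define a where "a t = - z (-p) t" for t
  define b where "b t = - z (1-p) t" for t
  have i1: "1 - p - 1 = - p" "1 - p + 1 = 2 - p" "-p + p = 0" "1 - p + p = 1" "- p + 1 = 1 - p" by simp_all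
  have "linmap (car T (-p)) VL (z (-p))" using HL[of "-p"] by (simp add: NN_car)
  then have la: "linmap (car T (-p)) VL a"
    unfolding a_def[abs_def] using linmap_VL_neg sT by blast
  have "linmap (car T (1-p)) VL (z (1-p))" using HL[of "1-p"] by (simp add: NN_car)
  then have lb: "linmap (car T (1-p)) VL b"
    unfolding b_def[abs_def] using linmap_VL_neg sT by blast
  have C2: "\<forall>t\<in>car T (-p). b (eps T (-p) t) = sc \<sigma> (a t)"
    using HE[of _ "-p"] unfolding a_def b_def i1 by (simp add: NN_car)
  have C4: "\<forall>t\<in>car T (-p). phi (a t) = sc \<sigma> (b (dif T (-p) t))"
  proof
    fix t assume t: "t \<in> car T (-p)"
    have "phi (z (-p) t) = sc \<sigma> (z (1-p) (dif T (-p) t))"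
      using HD[OF t] unfolding i1 by (simp add: NN_car)
    then show "phi (a t) = sc \<sigma> (b (dif T (-p) t))" unfolding a_def b_def by simp
  qed
  obtain c e where lc: "linmap (car T (1-p)) VL c" and le: "linmap (car T (2-p)) VL e"
    and H1: "\<forall>t\<in>car T (-p). c (eps T (-p) t) = 0"
    and H2: "\<forall>t\<in>car T (1-p). e (eps T (1-p) t) = sc (-\<sigma>) (c t)"
    and R1: "\<forall>t\<in>car T (-p). a t = sc \<sigma> (c (dif T (-p) t))"
    and R2: "\<forall>t\<in>car T (1-p). b t = phi (c t) + sc \<sigma> (e (dif T (1-p) t))"
    using core[OF T ff s2, of "1-p" a b] la lb C2 C4 unfolding i1 by blast
  define h where "h n t = (if n = 1 - p then c t else if n = 2 - p then e t else 0)" for n t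
  have hB: "homB T NN (p-1) h"
    unfolding homB_def
  proof (intro conjI allI ballI)
    fix n
    show "linmap (car T n) (car NN (n + (p - 1))) (h n)"
    proof (cases "n = 1 - p")
      case True
      then have "n + (p - 1) = 0" by simp
      then show ?thesis using lc True unfolding h_def by (simp add: NN_car)
    next
      case False
      show ?thesis
      proof (cases "n = 2 - p")
        case True
        then have "n + (p - 1) = 1" by simp
        then show ?thesis using le True unfolding h_def by (simp add: NN_car)
      next
        case F2: False
        then have "n + (p - 1) \<noteq> 0" "n + (p - 1) \<noteq> 1" using False by arith+
        then show ?thesis using False F2 unfolding h_def linmap_def by (simp add: NN_car)
      qed
    qed
    fix x assume x: "x \<in> car T n"
    show "h (n + 1) (eps T n x) = sc (ksign (p - 1)) (eps NN (n + (p - 1)) (h n x))"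
    proof -
      consider "n = -p" | "n = 1 - p" | "n = 2 - p" | "n \<noteq> -p" "n \<noteq> 1 - p" "n \<noteq> 2 - p" by blast
      then show ?thesis
      proof cases
        case 1
        then show ?thesis using H1 x unfolding h_def by (simp add: NN_car)
      next
        case 2
        then have "n + (p - 1) = 0" "n + 1 = 2 - p" "n \<noteq> 2 - p" by arith+
        then show ?thesis using H2 x 2 unfolding h_def by (simp add: NN_car ksign_pred \<sigma>_def)
      next
        case 3
        then have "n + 1 \<noteq> 1 - p" "n + 1 \<noteq> 2 - p" "n \<noteq> 1 - p" "n + (p - 1) = 1" by arith+
        then show ?thesis using 3 unfolding h_def by (simp add: NN_car)
      next
        case 4
        then have "n + 1 \<noteq> 1 - p" "n + 1 \<noteq> 2 - p" by arith+
        then show ?thesis using 4 unfolding h_def by (simp add: NN_car)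
      qed
    qed
  qed
  have "heq T (\<lambda>n t. - z n t) (homD T NN (p-1) h)"
    unfolding heq_def homD_def
  proof (intro allI ballI)
    fix n x assume x: "x \<in> car T n"
    consider "n = -p" | "n = 1 - p" | "n = 2 - p" | "n \<noteq> -p" "n \<noteq> 1 - p" "n \<noteq> 2 - p" by blast
    then show "- z n x = dif NN (n + (p - 1)) (h n x) - sc (ksign (p - 1)) (h (n + 1) (dif T n x))"
    proof cases
      case 1
      then have "n \<noteq> 1 - p" "n \<noteq> 2 - p" "n + 1 = 1 - p" "n + (p - 1) \<noteq> 0" by arith+
      then show ?thesis using R1 x 1 unfolding h_def a_def by (simp add: NN_car ksign_pred \<sigma>_def)
    next
      case 2
      then have "n + 1 = 2 - p" "n + (p - 1) = 0" by arith+
      then show ?thesis using R2 x 2 unfolding h_def b_def by (simp add: NN_car ksign_pred \<sigma>_def)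
    next
      case 3
      then have "n + 1 \<noteq> 1 - p" "n + 1 \<noteq> 2 - p" "n \<noteq> 1 - p" "n + (p - 1) = 1"
        "n + p \<noteq> 0" "n + p \<noteq> 1" by arith+
      then show ?thesis using 3 z0[OF x] unfolding h_def by (simp add: NN_car)
    next
      case 4
      then have "n + 1 \<noteq> 1 - p" "n + 1 \<noteq> 2 - p" "n + p \<noteq> 0" "n + p \<noteq> 1" by arith+
      then show ?thesis using 4 z0[OF x] unfolding h_def by (simp add: NN_car)
    qed
  qed
  then show ?thesis using hB by blast
qed

lemma weq: "weqB (MM :: (nat,'k::field) cdgB) NN prr"
  unfolding weqB_def homB_qiso_def
proof (rule allI, rule impI, rule allI, rule conjI)
  fix T :: "(nat,'k) cdgB" and p
  assume Tf: "is_cdgB T \<and> free_fin T"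
  then have T: "is_cdgB T" and ff: "free_fin T" by auto
  show "\<forall>z. homB T NN p z \<and> heq T (homD T NN p z) (\<lambda>_ _. 0) \<longrightarrow>
          (\<exists>z'. homB T MM p z' \<and> heq T (homD T MM p z') (\<lambda>_ _. 0) \<and>
                (\<exists>h. homB T NN (p - 1) h \<and> heq T (\<lambda>n t. prr (n + p) (z' n t) - z n t) (homD T NN (p - 1) h)))"
  proof (intro allI impI)
    fix z assume "homB T NN p z \<and> heq T (homD T NN p z) (\<lambda>_ _. 0)"
    then obtain h where h: "homB T NN (p-1) h" "heq T (\<lambda>n t. - z n t) (homD T NN (p-1) h)"
      using NN_acyclic[OF T ff] by blast
    have z0: "homB T MM p (\<lambda>_ _. 0)"
      unfolding homB_def linmap_def by (simp add: MM_car_zero MM_lin)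
    have z1: "heq T (homD T MM p (\<lambda>_ _. 0)) (\<lambda>_ _. 0)"
      unfolding heq_def homD_def by (simp add: MM_lin)
    have "heq T (\<lambda>n t. prr (n + p) ((\<lambda>_ _. 0) n t) - z n t) (homD T NN (p - 1) h)"
      using h(2) unfolding heq_def by (simp add: prr_def)
    then show "\<exists>z'. homB T MM p z' \<and> heq T (homD T MM p z') (\<lambda>_ _. 0) \<and>
                (\<exists>h. homB T NN (p - 1) h \<and> heq T (\<lambda>n t. prr (n + p) (z' n t) - z n t) (homD T NN (p - 1) h))"
      using z0 z1 h(1) by blast
  qed
  show "\<forall>z'. homB T MM p z' \<and> heq T (homD T MM p z') (\<lambda>_ _. 0) \<and>
          (\<exists>h. homB T NN (p - 1) h \<and> heq T (\<lambda>n t. prr (n + p) (z' n t)) (homD T NN (p - 1) h)) \<longrightarrow>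
          (\<exists>h'. homB T MM (p - 1) h' \<and> heq T z' (homD T MM (p - 1) h'))"
    using MM_acyclic[OF T] by blast
qed

theorem mainTheorem19:
  assumes "alg_closed TYPE('k::field)"
  shows "\<not> cofibrantB (Xmod :: (nat, 'k) cdgB)"
proof
  assume "cofibrantB (Xmod :: (nat, 'k) cdgB)"
  then have "\<exists>g. closed_morph (Xmod :: (nat, 'k) cdgB) MM g \<and> (\<forall>n. \<forall>x\<in>car Xmod n. prr n (g n x) = fX n x)"
    unfolding cofibrantB_def using MM_cdg NN_cdg prr_closed prr_fib weq fX_closed by blast
  then show False using no_lift by blast
qed

end
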